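(* Let $\mathbb{G}=(\mathbb{P},E)$ be an amenable rough formal context with $\mathbb{P}=(A,X,I)$, and let $R,S\subseteq A\times X$ be the lax and strict approximations of $I$ (defined below). Then $R;R\subseteq R$ and $S\subseteq S;S$, where $;$ is the composition of relations defined below.
   Context: For any relation $T\subseteq U\times V$ and $U'\subseteq U$, $V'\subseteq V$: $T^{(0)}[V']:=\{u\in U\mid \forall v\in V'\,(uTv)\}$ and $T^{(1)}[U']:=\{v\in V\mid \forall u\in U'\,(uTv)\}$; we write $T^{(0)}[v]$ for $T^{(0)}[\{v\}]$ and $T^{(1)}[u]$ for $T^{(1)}[\{u\}]$. A polarity is $\mathbb{P}=(A,X,I)$ with $I\subseteq A\times X$; for $B\subseteq A$, $Y\subseteq X$ put $B^{\uparrow}:=I^{(1)}[B]$ and $Y^{\downarrow}:=I^{(0)}[Y]$. A set $B\subseteq A$ is Galois-stable if $B=B^{\uparrow\downarrow}$; $Y\subseteq X$ is Galois-stable if $Y=Y^{\downarrow\uparrow}$. A relation $T\subseteq A\times X$ is $I$-compatible if $T^{(0)}[x]$ is Galois-stable for every $x\in X$ and $T^{(1)}[a]$ is Galois-stable for every $a\in A$. An equivalence relation $E$ on $A$ is $I$-compatible if the class $(a)_E:=\{b\in A\mid aEb\}$ is Galois-stable for every $a\in A$. A rough formal context is $\mathbb{G}=(\mathbb{P},E)$ with $E$ an equivalence relation on $A$. Its lax and strict approximations are $R,S\subseteq A\times X$: $aRx$ iff $bIx$ for some $b\in(a)_E$; $aSx$ iff $bIx$ for all $b\in(a)_E$. $\mathbb{G}$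 is amenable if $E$, $R$ and $S$ are all $I$-compatible. For $I$-compatible $R,T\subseteq A\times X$, the composition $R;T\subseteq A\times X$ is defined by: for every $x\in X$, $(R;T)^{(0)}[x]=R^{(0)}[I^{(1)}[T^{(0)}[x]]]$ (i.e. $a\,(R;T)\,x$ iff $a\in R^{(0)}[I^{(1)}[T^{(0)}[x]]]$). *)

theory Defs
  imports Main
begin

(* Polarity P = (A, X, I): A is the type 'a, X is the type 'x, I :: ('a \<times> 'x) set. *)

definition rel0 :: "('u \<times> 'v) set \<Rightarrow> 'v set \<Rightarrow> 'u set" where
  "rel0 T V' = {u. \<forall>v\<in>V'. (u, v) \<in> T}"

definition rel1 :: "('u \<times> 'v) set \<Rightarrow> 'u set \<Rightarrow> 'v set" where
  "rel1 T U' = {v. \<forall>u\<in>U'. (u, v) \<in> T}"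

definition galois_stable_A :: "('a \<times> 'x) set \<Rightarrow> 'a set \<Rightarrow> bool" where
  "galois_stable_A I B \<longleftrightarrow> B = rel0 I (rel1 I B)"

definition galois_stable_X :: "('a \<times> 'x) set \<Rightarrow> 'x set \<Rightarrow> bool" where
  "galois_stable_X I Y \<longleftrightarrow> Y = rel1 I (rel0 I Y)"

definition I_compatible :: "('a \<times> 'x) set \<Rightarrow> ('a \<times> 'x) set \<Rightarrow> bool" where
  "I_compatible I T \<longleftrightarrow>
     (\<forall>x. galois_stable_A I (rel0 T {x})) \<and> (\<forall>a. galois_stable_X I (rel1 T {a}))"

definition eq_I_compatible :: "('a \<times> 'x) set \<Rightarrow> ('a \<times> 'a) set \<Rightarrow> bool" where
  "eq_I_compatible I E \<longleftrightarrow> (\<forall>a. galois_stable_A I (E `` {a}))"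

definition lax :: "('a \<times> 'x) set \<Rightarrow> ('a \<times> 'a) set \<Rightarrow> ('a \<times> 'x) set" where
  "lax I E = {(a, x). \<exists>b\<in>E `` {a}. (b, x) \<in> I}"

definition strict :: "('a \<times> 'x) set \<Rightarrow> ('a \<times> 'a) set \<Rightarrow> ('a \<times> 'x) set" where
  "strict I E = {(a, x). \<forall>b\<in>E `` {a}. (b, x) \<in> I}"

definition amenable :: "('a \<times> 'x) set \<Rightarrow> ('a \<times> 'a) set \<Rightarrow> bool" where
  "amenable I E \<longleftrightarrow> eq_I_compatible I E \<and> I_compatible I (lax I E) \<and> I_compatible I (strict I E)"

definition rcomp :: "('a \<times> 'x) set \<Rightarrow> ('a \<times> 'x) set \<Rightarrow> ('a \<times> 'x) set \<Rightarrow> ('a \<times> 'x) set" where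
  "rcomp I R T = {(a, x). a \<in> rel0 R (rel1 I (rel0 T {x}))}"

end

theory Submission
  imports Defs
begin

theorem mainTheorem2:
  fixes I :: "('a \<times> 'x) set" and E :: "('a \<times> 'a) set"
  assumes "equiv UNIV E"
    and "amenable I E"
  shows "rcomp I (lax I E) (lax I E) \<subseteq> lax I E
       \<and> strict I E \<subseteq> rcomp I (strict I E) (strict I E)"
proof
  have refl: "\<And>a. (a,a) \<in> E" using assms(1) by (simp add: equiv_def refl_on_def)
  have tr: "\<And>a b c. (a,b) \<in> E \<Longrightarrow> (b,c) \<in> E \<Longrightarrow> (a,c) \<in> E"
    using assms(1) unfolding equiv_def trans_def by blast
  have sy: "\<And>a b. (a,b) \<in> E \<Longrightarrow> (b,a) \<in> E"
    using assms(1) unfolding equiv_def sym_def by blast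
  let ?R = "lax I E"
  have stE: "\<And>a. E `` {a} = rel0 I (rel1 I (E `` {a}))"
    using assms(2) unfolding amenable_def eq_I_compatible_def galois_stable_A_def by blast
  have stB: "\<And>x. rel0 ?R {x} = rel0 I (rel1 I (rel0 ?R {x}))"
    using assms(2) unfolding amenable_def I_compatible_def galois_stable_A_def by blast
  have stU: "\<And>a. rel1 ?R {a} = rel1 I (rel0 I (rel1 ?R {a}))"
    using assms(2) unfolding amenable_def I_compatible_def galois_stable_X_def by blast
  show "rcomp I ?R ?R \<subseteq> ?R"
  proof
    fix p assume p: "p \<in> rcomp I ?R ?R"
    obtain a x where px: "p = (a,x)" by (cases p)
    define B where "B = rel0 ?R {x}"
    define U where "U = rel1 ?R {a}"
    have hyp: "rel1 I B \<subseteq> U" using p px unfolding rcomp_def B_def U_def rel0_def rel1_def by auto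
    show "p \<in> ?R"
    proof (cases "rel0 I U = {}")
      case True
      then have "U = UNIV" using stU[of a] unfolding U_def[symmetric] by (simp add: rel1_def)
      then show ?thesis using px unfolding U_def rel1_def by auto
    next
      case False
      then obtain c where c: "c \<in> rel0 I U" by blast
      have "c \<in> rel0 I (rel1 I B)" using c hyp unfolding rel0_def by auto
      then have "c \<in> B" using stB[of x] B_def by simp
      then have cx: "(c,x) \<in> ?R" unfolding B_def rel0_def by simp
      have "c \<in> rel0 I (rel1 I (E `` {a}))"
      proof -
        have "\<And>y. y \<in> rel1 I (E `` {a}) \<Longrightarrow> y \<in> U"
          using refl unfolding rel1_def U_def lax_def by auto
        then show ?thesis using c unfolding rel0_def by auto
      qed
      then have "c \<in> E `` {a}" using stE[of a] by simp
      then have ac: "(a,c) \<in> E" by simp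
      from cx obtain b where "(c,b) \<in> E" "(b,x) \<in> I" unfolding lax_def by auto
      then show ?thesis using ac tr px unfolding lax_def by blast
    qed
  qed
next
  have tr: "\<And>a b c. (a,b) \<in> E \<Longrightarrow> (b,c) \<in> E \<Longrightarrow> (a,c) \<in> E"
    using assms(1) unfolding equiv_def trans_def by blast
  have sy: "\<And>a b. (a,b) \<in> E \<Longrightarrow> (b,a) \<in> E"
    using assms(1) unfolding equiv_def sym_def by blast
  show "strict I E \<subseteq> rcomp I (strict I E) (strict I E)"
  proof
    fix p assume p: "p \<in> strict I E"
    obtain a x where px: "p = (a,x)" by (cases p)
    have "\<And>y b. y \<in> rel1 I (rel0 (strict I E) {x}) \<Longrightarrow> (a,b) \<in> E \<Longrightarrow> (b,y) \<in> I"
    proof -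
      fix y b assume y: "y \<in> rel1 I (rel0 (strict I E) {x})" and ab: "(a,b) \<in> E"
      have "b \<in> rel0 (strict I E) {x}"
        using p px ab tr sy unfolding rel0_def strict_def by blast
      then show "(b,y) \<in> I" using y unfolding rel1_def by auto
    qed
    then show "p \<in> rcomp I (strict I E) (strict I E)"
      using px unfolding rcomp_def rel0_def strict_def by auto
  qed
qed

end
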